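(* Let $\Sigma$ be an alphabet with at least two letters, $k\ge1$, and $f\colon(\Sigma^* )^k\to\Sigma^*$ RCP. Then there exist $p_{f,1},\ldots,p_{f,k},e_f\in\mathbb{N}$ such that for all $x_1,\ldots,x_k\in\Sigma^*$ and all $a\in\Sigma$, $$|f(x_1,\ldots,x_k)|=p_{f,1}|x_1|+\cdots+p_{f,k}|x_k|+e_f,$$ $$|f(x_1,\ldots,x_k)|_a=p_{f,1}|x_1|_a+\cdots+p_{f,k}|x_k|_a+|f(\varepsilon,\ldots,\varepsilon)|_a,$$ where $e_f=|f(\varepsilon,\ldots,\varepsilon)|$ and $p_{f,i}=|f(\varepsilon,\ldots,\varepsilon,c,\varepsilon,\ldots,\varepsilon)|-|f(\varepsilon,\ldots,\varepsilon)|$ with the letter $c\in\Sigma$ in the $i$-th position (this value being independent of the choice of $c$).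
   Context: $\Sigma^*$ is the free monoid over $\Sigma$ (finite words, concatenation, empty word $\varepsilon$); $|u|$ is the length of $u$ and $|u|_a$ the number of occurrences of the letter $a$ in $u$. A function $f\colon(\Sigma^* )^k\to\Sigma^*$ is RCP if for every monoid morphism $\varphi\colon\Sigma^*\to\Sigma^*$ and all $u_1,\ldots,u_k,v_1,\ldots,v_k$ with $\varphi(u_i)=\varphi(v_i)$ for all $i$, we have $\varphi(f(u_1,\ldots,u_k))=\varphi(f(v_1,\ldots,v_k))$. *)

theory Defs
  imports Main
begin

definition monoid_morphism :: "('a list \<Rightarrow> 'a list) \<Rightarrow> bool" where
  "monoid_morphism \<phi> \<longleftrightarrow> \<phi> [] = [] \<and> (\<forall>u v. \<phi> (u @ v) = \<phi> u @ \<phi> v)"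

text \<open>A k-ary function on words is represented as a function on lists of words;
  only arguments of length k matter. RCP = respects all morphism-induced congruences.\<close>
definition RCP :: "nat \<Rightarrow> ('a list list \<Rightarrow> 'a list) \<Rightarrow> bool" where
  "RCP k f \<longleftrightarrow> (\<forall>\<phi>. monoid_morphism \<phi> \<longrightarrow>
     (\<forall>us vs. length us = k \<longrightarrow> length vs = k \<longrightarrow>
        (\<forall>i<k. \<phi> (us ! i) = \<phi> (vs ! i)) \<longrightarrow> \<phi> (f us) = \<phi> (f vs)))"

end

theory Submission
  imports Defs
begin

lemma concat_rep: "concat (map (\<lambda>x. replicate (g x) a) u) = replicate (sum_list (map g u)) a"
  by (induction u) (auto simp: replicate_add)

lemma morph: "monoid_morphism (\<lambda>u. concat (map h u))"
  unfolding monoid_morphism_def by simp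

lemma key:
  fixes g :: "'a \<Rightarrow> nat"
  assumes "RCP k f" "length xs = k" "length ys = k"
    "\<forall>i<k. sum_list (map g (xs!i)) = sum_list (map g (ys!i))"
  shows "sum_list (map g (f xs)) = sum_list (map g (f ys))"
proof -
  define \<phi> where "\<phi> = (\<lambda>u. concat (map (\<lambda>x. replicate (g x) (undefined::'a)) u))"
  have phi: "\<phi> u = replicate (sum_list (map g u)) undefined" for u
    unfolding \<phi>_def by (rule concat_rep)
  have A: "\<forall>us vs. length us = k \<longrightarrow> length vs = k \<longrightarrow>
        (\<forall>i<k. \<phi> (us ! i) = \<phi> (vs ! i)) \<longrightarrow> \<phi> (f us) = \<phi> (f vs)"
  proof -
    have m: "monoid_morphism \<phi>" unfolding \<phi>_def by (rule morph)
    from assms(1) have "\<forall>\<psi>. monoid_morphism \<psi> \<longrightarrow> (\<forall>us vs. length us = k \<longrightarrow> length vs = k \<longrightarrow>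
        (\<forall>i<k. \<psi> (us ! i) = \<psi> (vs ! i)) \<longrightarrow> \<psi> (f us) = \<psi> (f vs))"
      unfolding RCP_def .
    from spec[OF this, of \<phi>] m show ?thesis by (rule mp)
  qed
  have B: "\<forall>i<k. \<phi> (xs ! i) = \<phi> (ys ! i)"
    using assms(4) by (simp add: phi)
  have "\<phi> (f xs) = \<phi> (f ys)"
    using A assms(2,3) B by blast
  thus ?thesis by (simp add: phi)
qed

lemma cnt_rep[simp]: "count_list (replicate n a) a = n"
  by (induction n) auto

lemma cnt_rep2[simp]: "a \<noteq> b \<Longrightarrow> count_list (replicate n a) b = 0"
  by (induction n) auto

lemma cnt_sum: "count_list u a = sum_list (map (\<lambda>x. if x = a then 1 else 0) u)"
  by (induction u) auto

lemma cnt_sum2: "a \<noteq> b \<Longrightarrow> count_list u a + count_list u b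
   = sum_list (map (\<lambda>x. if x = a \<or> x = b then 1 else 0) u)"
  by (induction u) auto

context
  fixes f :: "'a list list \<Rightarrow> 'a list" and k :: nat
  assumes R: "RCP k f"
begin

definition V :: "'a \<Rightarrow> (nat \<Rightarrow> nat) \<Rightarrow> 'a list list" where
  "V a n = map (\<lambda>i. replicate (n i) a) [0..<k]"

definition C :: "'a \<Rightarrow> (nat \<Rightarrow> nat) \<Rightarrow> int" where
  "C a n = int (count_list (f (V a n)) a)"

definition D :: "'a \<Rightarrow> (nat \<Rightarrow> nat) \<Rightarrow> int" where
  "D a n = C a n - C a (\<lambda>_. 0)"

lemma V_cong: "(\<forall>i<k. n i = m i) \<Longrightarrow> V a n = V a m"
  unfolding V_def by auto

lemma C_cong: "(\<forall>i<k. n i = m i) \<Longrightarrow> C a n = C a m"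
  unfolding C_def using V_cong by metis

lemma stepA:
  assumes "length xs = k" "\<forall>i<k. n i = count_list (xs!i) a"
  shows "count_list (f xs) a = count_list (f (V a n)) a"
proof -
  let ?g = "\<lambda>x. if x = a then 1 else (0::nat)"
  have "sum_list (map ?g (f xs)) = sum_list (map ?g (f (V a n)))"
  proof (rule key[OF R assms(1)])
    show "length (V a n) = k" by (simp add: V_def)
    show "\<forall>i<k. sum_list (map ?g (xs ! i)) = sum_list (map ?g (V a n ! i))"
    proof (intro allI impI)
      fix i assume i: "i < k"
      have "count_list (V a n ! i) a = n i" using i by (simp add: V_def)
      thus "sum_list (map ?g (xs ! i)) = sum_list (map ?g (V a n ! i))"
        using assms(2) i by (simp only: cnt_sum[symmetric])
    qed
  qed
  thus ?thesis by (simp only: cnt_sum[symmetric])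
qed

lemma stepB:
  assumes "a \<noteq> b"
  shows "C a n + C b m = C a (\<lambda>i. n i + m i) + C b (\<lambda>_. 0)"
proof -
  let ?W = "map (\<lambda>i. replicate (n i) a @ replicate (m i) b) [0..<k]"
  let ?g = "\<lambda>x. if x = a \<or> x = b then 1 else (0::nat)"
  have "sum_list (map ?g (f ?W)) = sum_list (map ?g (f (V a (\<lambda>i. n i + m i))))"
  proof (rule key[OF R])
    show "length ?W = k" "length (V a (\<lambda>i. n i + m i)) = k" by (auto simp: V_def)
    show "\<forall>i<k. sum_list (map ?g (?W ! i)) = sum_list (map ?g (V a (\<lambda>i. n i + m i) ! i))"
    proof (intro allI impI)
      fix i assume i: "i < k"
      have "count_list (?W ! i) a + count_list (?W ! i) b =
            count_list (V a (\<lambda>i. n i + m i) ! i) a + count_list (V a (\<lambda>i. n i + m i) ! i) b"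
        using i assms by (simp add: V_def)
      thus "sum_list (map ?g (?W ! i)) = sum_list (map ?g (V a (\<lambda>i. n i + m i) ! i))"
        by (simp only: cnt_sum2[OF assms])
    qed
  qed
  hence 1: "count_list (f ?W) a + count_list (f ?W) b =
     count_list (f (V a (\<lambda>i. n i + m i))) a + count_list (f (V a (\<lambda>i. n i + m i))) b"
    by (simp only: cnt_sum2[OF assms])
  have lW: "length ?W = k" by simp
  have 2: "count_list (f ?W) a = count_list (f (V a n)) a"
    by (rule stepA[OF lW]) (simp add: assms)
  have 3: "count_list (f ?W) b = count_list (f (V b m)) b"
    by (rule stepA[OF lW]) (simp add: assms[symmetric])
  have lV: "length (V a (\<lambda>i. n i + m i)) = k" by (simp add: V_def)
  have 4: "count_list (f (V a (\<lambda>i. n i + m i))) b = count_list (f (V b (\<lambda>_. 0))) b"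
    by (rule stepA[OF lV]) (simp add: V_def assms)
  have "count_list (f (V a n)) a + count_list (f (V b m)) b =
        count_list (f (V a (\<lambda>i. n i + m i))) a + count_list (f (V b (\<lambda>_. 0))) b"
    using 1 2 3 4 by linarith
  thus ?thesis unfolding C_def by (metis of_nat_add)
qed

lemma D_same: "a \<noteq> b \<Longrightarrow> D a n = D b n"
  using stepB[of a b "\<lambda>_. 0" n] unfolding D_def by simp

lemma D_add:
  assumes "a \<noteq> b"
  shows "D a (\<lambda>i. n i + m i) = D a n + D a m"
  using stepB[OF assms, of n m] D_same[OF assms, of m] unfolding D_def by simp

lemma D_scal:
  assumes "a \<noteq> b"
  shows "D a (\<lambda>j. if j = i then t else 0) = int t * D a (\<lambda>j. if j = i then 1 else 0)"
proof (induction t)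
  case 0
  then show ?case by (simp add: D_def)
next
  case (Suc t)
  have "D a (\<lambda>j. if j = i then Suc t else 0) =
     D a (\<lambda>j. (if j = i then t else 0) + (if j = i then 1 else 0))"
    by (rule arg_cong[where f="D a"]) auto
  also have "\<dots> = D a (\<lambda>j. if j = i then t else 0) + D a (\<lambda>j. if j = i then 1 else 0)"
    by (rule D_add[OF assms])
  also have "\<dots> = int (Suc t) * D a (\<lambda>j. if j = i then 1 else 0)"
    unfolding Suc by (simp add: algebra_simps)
  finally show ?case .
qed

lemma D_lin_aux:
  assumes "a \<noteq> b"
  shows "D a (\<lambda>i. if i < j then n i else 0) = (\<Sum>i<j. int (n i) * D a (\<lambda>l. if l = i then 1 else 0))"
proof (induction j)
  case 0
  then show ?case by (simp add: D_def)
next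
  case (Suc j)
  have "D a (\<lambda>i. if i < Suc j then n i else 0) =
      D a (\<lambda>i. (if i < j then n i else 0) + (if i = j then n j else 0))"
    by (rule arg_cong[where f="D a"]) auto
  also have "\<dots> = D a (\<lambda>i. if i < j then n i else 0) + D a (\<lambda>i. if i = j then n j else 0)"
    by (rule D_add[OF assms])
  also have "\<dots> = (\<Sum>i<j. int (n i) * D a (\<lambda>l. if l = i then 1 else 0)) + int (n j) * D a (\<lambda>l. if l = j then 1 else 0)"
    by (simp only: Suc.IH D_scal[OF assms, of j "n j"])
  also have "\<dots> = (\<Sum>i<Suc j. int (n i) * D a (\<lambda>l. if l = i then 1 else 0))"
    by (simp only: sum.lessThan_Suc)
  finally show ?case .
qed

lemma D_lin:
  assumes "a \<noteq> b"
  shows "D a n = (\<Sum>i<k. int (n i) * D a (\<lambda>l. if l = i then 1 else 0))"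
proof -
  have "C a n = C a (\<lambda>i. if i < k then n i else 0)"
    by (rule C_cong) simp
  hence "D a n = D a (\<lambda>i. if i < k then n i else 0)"
    unfolding D_def by simp
  thus ?thesis using D_lin_aux[OF assms] by simp
qed

lemma D_nonneg:
  assumes "a \<noteq> b"
  shows "D a (\<lambda>l. if l = i then 1 else 0) \<ge> 0"
proof (rule ccontr)
  let ?d = "D a (\<lambda>l. if l = i then 1 else 0)"
  assume "\<not> ?d \<ge> 0"
  hence d: "?d \<le> -1" by simp
  let ?c = "C a (\<lambda>_. 0)"
  have c0: "?c \<ge> 0" unfolding C_def by simp
  let ?t = "nat ?c + 1"
  have ti: "int ?t = ?c + 1" using c0 by simp
  have e: "C a (\<lambda>j. if j = i then ?t else 0) = ?c + int ?t * ?d"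
    using D_scal[OF assms, of i ?t] unfolding D_def by simp
  have "int ?t * ?d \<le> int ?t * (-1)" using d by (intro mult_left_mono) auto
  also have "\<dots> = - (?c + 1)" using ti by simp
  finally have "int ?t * ?d \<le> - (?c + 1)" .
  hence "C a (\<lambda>j. if j = i then ?t else 0) < 0" using e ti by linarith
  moreover have "C a (\<lambda>j. if j = i then ?t else 0) \<ge> 0" unfolding C_def by simp
  ultimately show False by linarith
qed

end

theorem mainTheorem13:
  fixes f :: "('a::finite) list list \<Rightarrow> 'a list" and k :: nat
  assumes "card (UNIV :: 'a set) \<ge> 2" and "k \<ge> 1" and "RCP k f"
  shows "\<exists>(p :: nat \<Rightarrow> nat) (e :: nat).
     e = length (f (replicate k [])) \<and>
     (\<forall>i<k. \<forall>c. length (f ((replicate k [])[i := [c]])) = p i + e) \<and>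
     (\<forall>xs. length xs = k \<longrightarrow>
        length (f xs) = (\<Sum>i<k. p i * length (xs ! i)) + e \<and>
        (\<forall>a. count_list (f xs) a =
               (\<Sum>i<k. p i * count_list (xs ! i) a) + count_list (f (replicate k [])) a))"
proof -
  note R = assms(3)
  have other: "\<exists>b. b \<noteq> (a::'a)" for a
  proof (rule ccontr)
    assume "\<not> (\<exists>b. b \<noteq> a)"
    hence "\<forall>b. b = a" by blast
    hence U: "(UNIV::'a set) = {a}" by blast
    have "card (UNIV::'a set) = card {a}" by (simp only: U)
    hence "card (UNIV::'a set) = 1" by simp
    thus False using assms(1) by linarith
  qed
  define a0 :: 'a where "a0 = undefined"
  define p where "p i = nat (D f k a0 (\<lambda>l. if l = i then 1 else 0))" for i
  have pD: "int (p i) = D f k a (\<lambda>l. if l = i then 1 else 0)" for i a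
  proof -
    obtain b where b: "b \<noteq> a0" using other by blast
    have "D f k a (\<lambda>l. if l = i then 1 else 0) = D f k a0 (\<lambda>l. if l = i then 1 else 0)"
    proof (cases "a = a0")
      case True then show ?thesis by simp
    next
      case False then show ?thesis by (rule D_same[OF R])
    qed
    moreover have "D f k a0 (\<lambda>l. if l = i then 1 else 0) \<ge> 0"
      using D_nonneg[OF R b[symmetric]] .
    ultimately show ?thesis unfolding p_def by simp
  qed
  have V0: "V k (a::'a) (\<lambda>_. 0) = replicate k []" for a
    by (simp add: V_def[OF R] map_replicate_const)
  have cnt: "count_list (f xs) a =
               (\<Sum>i<k. p i * count_list (xs ! i) a) + count_list (f (replicate k [])) a"
    if xs: "length xs = k" for xs a
  proof -
    obtain b where b: "b \<noteq> a" using other by blast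
    let ?n = "\<lambda>i. count_list (xs ! i) a"
    have "int (count_list (f xs) a) = C f k a ?n"
      unfolding C_def[OF R] using stepA[OF R xs, of ?n a] by simp
    also have "\<dots> = C f k a (\<lambda>_. 0) + D f k a ?n" unfolding D_def[OF R] by simp
    also have "\<dots> = int (count_list (f (replicate k [])) a) + (\<Sum>i<k. int (?n i) * int (p i))"
    proof -
      have "D f k a ?n = (\<Sum>i<k. int (?n i) * int (p i))"
        unfolding D_lin[OF R b[symmetric], of ?n] pD[of _ a] ..
      moreover have "C f k a (\<lambda>_. 0) = int (count_list (f (replicate k [])) a)"
        unfolding C_def[OF R] V0 ..
      ultimately show ?thesis by simp
    qed
    finally have h: "int (count_list (f xs) a) = int (count_list (f (replicate k [])) a) + (\<Sum>i<k. int (?n i) * int (p i))" .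
    have "int (\<Sum>i<k. p i * ?n i) = (\<Sum>i<k. int (?n i) * int (p i))"
      by (simp add: mult.commute)
    thus ?thesis using h by linarith
  qed
  have len: "length (f xs) = (\<Sum>i<k. p i * length (xs ! i)) + length (f (replicate k []))"
    if xs: "length xs = k" for xs
  proof -
    have "length (f xs) = (\<Sum>a\<in>UNIV. count_list (f xs) a)"
      by (simp add: sum_count_set)
    also have "\<dots> = (\<Sum>a\<in>UNIV. (\<Sum>i<k. p i * count_list (xs ! i) a) + count_list (f (replicate k [])) a)"
      using cnt[OF xs] by simp
    also have "\<dots> = (\<Sum>i<k. p i * (\<Sum>a\<in>UNIV. count_list (xs ! i) a)) + (\<Sum>a\<in>UNIV. count_list (f (replicate k [])) a)"
    proof -
      have sw: "(\<Sum>a\<in>UNIV. \<Sum>i<k. p i * count_list (xs ! i) a) = (\<Sum>i<k. p i * (\<Sum>a\<in>UNIV. count_list (xs ! i) a))"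
        unfolding sum_distrib_left by (rule sum.swap)
      show ?thesis by (simp only: sum.distrib sw)
    qed
    also have "\<dots> = (\<Sum>i<k. p i * length (xs ! i)) + length (f (replicate k []))"
      by (simp add: sum_count_set)
    finally show ?thesis .
  qed
  have single: "length (f ((replicate k [])[i := [c]])) = p i + length (f (replicate k []))"
    if i: "i < k" for i c
  proof -
    have "(\<Sum>j<k. p j * length (((replicate k [])[i := [c]]) ! j)) = (\<Sum>j<k. if j = i then p i else 0)"
      by (rule sum.cong) (auto simp: nth_list_update)
    also have "\<dots> = p i" using i by simp
    finally show ?thesis using len[of "(replicate k [])[i := [c]]"] by simp
  qed
  show ?thesis
    apply (rule exI[of _ p])
    apply (rule exI[of _ "length (f (replicate k []))"])
    apply (intro conjI allI impI)
       apply (rule refl)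
      apply (erule single)
     apply (erule len)
    apply (erule cnt)
    done
qed

end
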